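(* Let $m,\ell\geq 2$ and let $n\ge 1$ be divisible by $\ell$. Then \[a_{2(\ell)}(n)=b_\ell(2n,n),\] and more generally \[a_{m(\ell)}(n)=a_{(m-1)(\ell)}(2n,n).\]
   Context: An $\ell$-regular partition is a partition with no part divisible by $\ell$. $a_{m(\ell)}(n)$ is the number of $\ell$-regular partitions of $n$ in which the smallest part occurs at least $m$ times. $a_{m(\ell)}(N,k)$ is the number of $\ell$-regular partitions of $N$ in which the smallest part occurs at least $m$ times and the largest part minus the smallest part equals $k$. $b_\ell(N,k)$ is the number of $\ell$-regular partitions of $N$ in which the largest part minus the smallest part equals $k$. *)

theory Defs
  imports Main "HOL-Library.Multiset"
begin

definition is_partition :: "nat multiset \<Rightarrow> nat \<Rightarrow> bool" where
  "is_partition P N \<longleftrightarrow> (\<forall>x\<in>#P. 0 < x) \<and> sum_mset P = N"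

definition regular :: "nat \<Rightarrow> nat multiset \<Rightarrow> bool" where
  "regular l P \<longleftrightarrow> (\<forall>x\<in>#P. \<not> l dvd x)"

definition smallest_part :: "nat multiset \<Rightarrow> nat" where
  "smallest_part P = Min (set_mset P)"

definition largest_part :: "nat multiset \<Rightarrow> nat" where
  "largest_part P = Max (set_mset P)"

definition smallest_mult_ge :: "nat \<Rightarrow> nat multiset \<Rightarrow> bool" where
  "smallest_mult_ge m P \<longleftrightarrow> P \<noteq> {#} \<and> m \<le> count P (smallest_part P)"

definition a_reg :: "nat \<Rightarrow> nat \<Rightarrow> nat \<Rightarrow> nat" where
  "a_reg m l n = card {P. is_partition P n \<and> regular l P \<and> smallest_mult_ge m P}"

definition a_reg2 :: "nat \<Rightarrow> nat \<Rightarrow> nat \<Rightarrow> nat \<Rightarrow> nat" where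
  "a_reg2 m l N k = card {P. is_partition P N \<and> regular l P \<and> smallest_mult_ge m P
      \<and> P \<noteq> {#} \<and> largest_part P - smallest_part P = k}"

definition b_reg :: "nat \<Rightarrow> nat \<Rightarrow> nat \<Rightarrow> nat" where
  "b_reg l N k = card {P. is_partition P N \<and> regular l P
      \<and> P \<noteq> {#} \<and> largest_part P - smallest_part P = k}"

end

theory Submission
  imports Defs
begin

lemma mem_le_sum: "x \<in># (P::nat multiset) \<Longrightarrow> x \<le> sum_mset P"
  by (metis le_add1 multi_member_split sum_mset.add_mset)

lemma min_props:
  assumes "P \<noteq> {#}"
  shows "smallest_part P \<in># P" "\<And>x. x \<in># P \<Longrightarrow> smallest_part P \<le> x"
  using assms by (auto simp: smallest_part_def)

lemma max_props:
  assumes "P \<noteq> {#}"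
  shows "largest_part P \<in># P" "\<And>x. x \<in># P \<Longrightarrow> x \<le> largest_part P"
  using assms by (auto simp: largest_part_def)

lemma smallest_eq:
  assumes "s \<in># P" "\<And>x. x \<in># P \<Longrightarrow> s \<le> x" shows "smallest_part P = s"
  unfolding smallest_part_def using assms
  by (metis Min_eqI finite_set_mset)

lemma largest_eq:
  assumes "s \<in># P" "\<And>x. x \<in># P \<Longrightarrow> x \<le> s" shows "largest_part P = s"
  unfolding largest_part_def using assms
  by (metis Max_eqI finite_set_mset)

definition fwd :: "nat \<Rightarrow> nat multiset \<Rightarrow> nat multiset" where
  "fwd n P = add_mset (smallest_part P + n) (P - {#smallest_part P#})"

definition bwd :: "nat multiset \<Rightarrow> nat multiset" where
  "bwd Q = add_mset (smallest_part Q) (Q - {#largest_part Q#})"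

lemma main_bij:
  fixes m l n :: nat
  assumes m: "m \<ge> 2" and n: "n \<ge> 1" and ln: "l dvd n"
  shows "a_reg m l n = a_reg2 (m - 1) l (2*n) n"
proof -
  let ?A = "{P. is_partition P n \<and> regular l P \<and> smallest_mult_ge m P}"
  let ?B = "{P. is_partition P (2*n) \<and> regular l P \<and> smallest_mult_ge (m-1) P
      \<and> P \<noteq> {#} \<and> largest_part P - smallest_part P = n}"
  have fA: "fwd n P \<in> ?B \<and> bwd (fwd n P) = P" if "P \<in> ?A" for P
  proof -
    define s where "s = smallest_part P"
    from that have ne: "P \<noteq> {#}" and cnt: "m \<le> count P s" and pos: "\<forall>x\<in>#P. 0 < x"
      and sm: "sum_mset P = n" and reg: "regular l P"
      by (auto simp: smallest_mult_ge_def is_partition_def s_def)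
    have sin: "s \<in># P" and sle: "\<And>x. x \<in># P \<Longrightarrow> s \<le> x"
      using min_props[OF ne] s_def by auto
    have spos: "s > 0" using pos sin by auto
    obtain R where R: "P = add_mset s R" using sin by (metis multi_member_split)
    have "count P s = Suc (count R s)" using R by simp
    hence "count R s \<ge> 1" using cnt m by linarith
    hence sR: "s \<in># R" by (simp add: Suc_le_eq)
    have cR: "count R s = count P s - 1" using R by simp
    have Rle: "x \<le> n" if "x \<in># R" for x using mem_le_sum[of x P] R that sm by auto
    have fP: "fwd n P = add_mset (s+n) R" unfolding fwd_def s_def[symmetric] using R by simp
    have sm2: "smallest_part (fwd n P) = s" unfolding fP
      by (rule smallest_eq) (use sR sle R in auto)
    have lg2: "largest_part (fwd n P) = s + n" unfolding fP
      by (rule largest_eq) (use Rle in force)+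
    have "fwd n P \<in> ?B"
    proof -
      have "is_partition (fwd n P) (2*n)" unfolding fP using pos sm R spos
        by (auto simp: is_partition_def)
      moreover have "regular l (fwd n P)" unfolding fP using reg R ln sin
        by (auto simp: regular_def dvd_add_left_iff)
      moreover have "smallest_mult_ge (m-1) (fwd n P)"
      proof -
        have "count (fwd n P) s = count R s" using n by (simp add: fP)
        moreover have "fwd n P \<noteq> {#}" by (simp add: fP)
        ultimately show ?thesis using cnt R unfolding smallest_mult_ge_def sm2 by simp
      qed
      ultimately show ?thesis using sm2 lg2 by (simp add: fP)
    qed
    moreover have "bwd (fwd n P) = P" unfolding bwd_def sm2 lg2 using fP R by simp
    ultimately show ?thesis by blast
  qed
  have fB: "bwd Q \<in> ?A \<and> fwd n (bwd Q) = Q" if "Q \<in> ?B" for Q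
  proof -
    define s where "s = smallest_part Q"
    define t where "t = largest_part Q"
    from that have ne: "Q \<noteq> {#}" and cnt: "m - 1 \<le> count Q s" and pos: "\<forall>x\<in>#Q. 0 < x"
      and sm: "sum_mset Q = 2*n" and reg: "regular l Q" and d: "t - s = n"
      by (auto simp: smallest_mult_ge_def is_partition_def s_def t_def)
    have sin: "s \<in># Q" and sle: "\<And>x. x \<in># Q \<Longrightarrow> s \<le> x"
      using min_props[OF ne] s_def by auto
    have tin: "t \<in># Q" and tle: "\<And>x. x \<in># Q \<Longrightarrow> x \<le> t"
      using max_props[OF ne] t_def by auto
    have st: "s \<le> t" using sle tin by auto
    have tv: "t = s + n" using d st by simp
    obtain R where R: "Q = add_mset t R" using tin by (metis multi_member_split)
    have sR: "s \<in># R" using sin R tv n by auto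
    have Rs: "sum_mset R = n - s" using sm R tv by simp
    have tR: "x < t" if "x \<in># R" for x
    proof (rule ccontr)
      assume "\<not> x < t"
      hence "x \<ge> t" by simp
      have "s \<le> sum_mset (R - {#x#})"
      proof -
        have "x \<noteq> s" using \<open>x \<ge> t\<close> tv n by simp
        hence "s \<in># R - {#x#}" using sR by (simp add: in_diff_count)
        thus ?thesis by (rule mem_le_sum)
      qed
      moreover have "sum_mset R = x + sum_mset (R - {#x#})"
        using that by (metis insert_DiffM sum_mset.add_mset)
      moreover have "s > 0" using pos sin by blast
      ultimately show False using Rs \<open>x \<ge> t\<close> tv by linarith
    qed
    have bQ: "bwd Q = add_mset s R" unfolding bwd_def s_def[symmetric] t_def[symmetric]
      using R by simp
    have sm2: "smallest_part (bwd Q) = s" unfolding bQ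
      by (rule smallest_eq) (use sle R in auto)
    have "bwd Q \<in> ?A"
    proof -
      have "s > 0" using pos sin by blast
      moreover have "s \<le> n - s" using Rs sR mem_le_sum[of s R] by simp
      ultimately have "is_partition (bwd Q) n" unfolding bQ using pos R Rs
        by (auto simp: is_partition_def)
      moreover have "regular l (bwd Q)" unfolding bQ using reg R sin
        by (auto simp: regular_def)
      moreover have "smallest_mult_ge m (bwd Q)"
      proof -
        have "count (bwd Q) s = Suc (count R s)" by (simp add: bQ)
        moreover have "count Q s = count R s" using R tv n by simp
        moreover have "bwd Q \<noteq> {#}" by (simp add: bQ)
        ultimately show ?thesis using cnt m unfolding smallest_mult_ge_def sm2 by simp
      qed
      ultimately show ?thesis by simp
    qed
    moreover have "fwd n (bwd Q) = Q" unfolding fwd_def sm2 using bQ R tv by simp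
    ultimately show ?thesis by blast
  qed
  have "bij_betw (fwd n) ?A ?B"
  proof (rule bij_betw_byWitness[where f'=bwd])
    show "\<forall>a\<in>?A. bwd (fwd n a) = a"
    proof
      fix a assume "a \<in> ?A"
      from fA[OF this] show "bwd (fwd n a) = a" by (rule conjunct2)
    qed
    show "\<forall>a\<in>?B. fwd n (bwd a) = a"
    proof
      fix a assume "a \<in> ?B"
      from fB[OF this] show "fwd n (bwd a) = a" by (rule conjunct2)
    qed
    show "fwd n ` ?A \<subseteq> ?B"
    proof
      fix y assume "y \<in> fwd n ` ?A"
      then obtain a where a: "a \<in> ?A" and y: "y = fwd n a" by (rule imageE)
      from fA[OF a] have "fwd n a \<in> ?B" by (rule conjunct1)
      then show "y \<in> ?B" unfolding y .
    qed
    show "bwd ` ?B \<subseteq> ?A"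
    proof
      fix y assume "y \<in> bwd ` ?B"
      then obtain a where a: "a \<in> ?B" and y: "y = bwd a" by (rule imageE)
      from fB[OF a] have "bwd a \<in> ?A" by (rule conjunct1)
      then show "y \<in> ?A" unfolding y .
    qed
  qed
  then show ?thesis unfolding a_reg_def a_reg2_def by (rule bij_betw_same_card)
qed

theorem theorem5p5:
  fixes m l n :: nat
  assumes "m \<ge> 2" and "l \<ge> 2" and "n \<ge> 1" and "l dvd n"
  shows "a_reg 2 l n = b_reg l (2*n) n \<and> a_reg m l n = a_reg2 (m - 1) l (2*n) n"
proof
  have "a_reg2 1 l (2*n) n = b_reg l (2*n) n"
  proof -
    have h: "smallest_mult_ge 1 P = (P \<noteq> {#})" for P
      unfolding smallest_mult_ge_def using min_props(1)[of P]
      by (auto simp: Suc_le_eq)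
    show ?thesis unfolding a_reg2_def b_reg_def h by simp
  qed
  then show "a_reg 2 l n = b_reg l (2*n) n" using main_bij[of 2 n l] assms by simp
  show "a_reg m l n = a_reg2 (m - 1) l (2*n) n" using main_bij assms by simp
qed

end
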